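(* Let $r\ge1$ and let $\lambda,\mu$ be pre-partitions of length at most $r$ with $\lambda\lhd\mu$. Then there exists a finite sequence of pre-partitions of length at most $r$, \[ \lambda=\nu^m\lhd\nu^{m-1}\lhd\cdots\lhd\nu^1\lhd\nu^0=\mu, \] such that for each $i$, $\nu^i$ is obtained from $\nu^{i-1}$ via a simple removal, an infinite removal, a slip, or a fall.
   Context: Let $\overline{\mathbb N}=\mathbb N\cup\{\infty\}$ with $\infty>n$ and $\infty+n=\infty$ for all $n$. A pre-partition of length at most $r$ is a non-increasing sequence $\lambda=(\lambda_1\ge\lambda_2\ge\dots\ge\lambda_r\ge0)$ in $\overline{\mathbb N}$ (all later terms being $0$). Co-domination: $\lambda\lhd\mu$ iff $\lambda_i+\lambda_{i+1}+\dots+\lambda_r\le\mu_i+\mu_{i+1}+\dots+\mu_r$ for all $i$. For pre-partitions $\lambda,\mu$: $\lambda$ is obtained from $\mu$ by a simple removal if, with $j$ the smallest index such that $\mu_j$ is finite, $\lambda_j=\mu_j-1$ and $\lambda_i=\mu_i$ for $i\ne j$; by an infinite removal if, with $j$ the largest index such that $\mu_j=\infty$, $\lambda_j<\mu_j=\infty$ and $\lambda_i=\mu_i$ for $i\ne j$; by a slip if for some $j\ge1$, $\lambda_{j+1}=\mu_{j+1}-1$, $\lambda_j=\mu_j+1$ and $\lambda_i=\mu_i$ for $i\notin\{j,j+1\}$; by a fall if for some $j<k$, $\lambda_k=\mu_k-1$, $\lambda_j=\mu_j+1$, $\lambda_i=\mu_i$ for $i\notin\{j,k\}$, and $\mu_i=\mu_{i'}$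 for all $i,i'\in\{j,\dots,k\}$. *)

theory Defs
  imports "HOL-Library.Extended_Nat"
begin

text \<open>A pre-partition of length at most r is represented by the list of its first r
  entries (indices are 0-based: list position i corresponds to the paper's index i+1;
  all later entries are implicitly 0).\<close>

definition prepartition :: "nat \<Rightarrow> enat list \<Rightarrow> bool" where
  "prepartition r xs \<longleftrightarrow> length xs = r \<and> sorted_wrt (\<lambda>a b. b \<le> a) xs"

definition codom :: "enat list \<Rightarrow> enat list \<Rightarrow> bool" where
  "codom l m \<longleftrightarrow> length l = length m \<and>
     (\<forall>i < length l. sum_list (drop i l) \<le> sum_list (drop i m))"

definition simple_removal :: "enat list \<Rightarrow> enat list \<Rightarrow> bool" where
  "simple_removal l m \<longleftrightarrow> length l = length m \<and>
     (\<exists>j < length m. m ! j \<noteq> \<infinity> \<and> (\<forall>i < j. m ! i = \<infinity>) \<and>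
        l ! j + 1 = m ! j \<and> (\<forall>i < length m. i \<noteq> j \<longrightarrow> l ! i = m ! i))"

definition infinite_removal :: "enat list \<Rightarrow> enat list \<Rightarrow> bool" where
  "infinite_removal l m \<longleftrightarrow> length l = length m \<and>
     (\<exists>j < length m. m ! j = \<infinity> \<and> (\<forall>i. j < i \<and> i < length m \<longrightarrow> m ! i \<noteq> \<infinity>) \<and>
        l ! j < m ! j \<and> (\<forall>i < length m. i \<noteq> j \<longrightarrow> l ! i = m ! i))"

definition slip :: "enat list \<Rightarrow> enat list \<Rightarrow> bool" where
  "slip l m \<longleftrightarrow> length l = length m \<and>
     (\<exists>j. j + 1 < length m \<and> l ! (j + 1) + 1 = m ! (j + 1) \<and> l ! j = m ! j + 1 \<and>
        (\<forall>i < length m. i \<noteq> j \<and> i \<noteq> j + 1 \<longrightarrow> l ! i = m ! i))"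

definition fall :: "enat list \<Rightarrow> enat list \<Rightarrow> bool" where
  "fall l m \<longleftrightarrow> length l = length m \<and>
     (\<exists>j k. j < k \<and> k < length m \<and> l ! k + 1 = m ! k \<and> l ! j = m ! j + 1 \<and>
        (\<forall>i < length m. i \<noteq> j \<and> i \<noteq> k \<longrightarrow> l ! i = m ! i) \<and>
        (\<forall>i i'. j \<le> i \<and> i \<le> k \<and> j \<le> i' \<and> i' \<le> k \<longrightarrow> m ! i = m ! i'))"

definition elementary_step :: "enat list \<Rightarrow> enat list \<Rightarrow> bool" where
  "elementary_step l m \<longleftrightarrow>
     simple_removal l m \<or> infinite_removal l m \<or> slip l m \<or> fall l m"

end

theory Submission imports Defs begin

definition S :: "enat list \<Rightarrow> nat \<Rightarrow> enat" where
  "S xs i = sum_list (drop i xs)"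

lemma S_step: "i < length xs \<Longrightarrow> S xs i = xs!i + S xs (Suc i)"
  unfolding S_def by (metis Cons_nth_drop_Suc sum_list.Cons)

lemma S_ge: "length xs \<le> i \<Longrightarrow> S xs i = 0"
  unfolding S_def by simp

lemma S_mem: "i \<le> j \<Longrightarrow> j < length xs \<Longrightarrow> xs!j \<le> S xs i"
proof -
  assume a: "i \<le> j" "j < length xs"
  have "drop i xs ! (j-i) = xs!j" using a by simp
  moreover have "j - i < length (drop i xs)" using a by simp
  ultimately show ?thesis unfolding S_def by (metis elem_le_sum_list)
qed

lemma sum_list_inf: "sum_list (xs::enat list) = \<infinity> \<Longrightarrow> \<infinity> \<in> set xs"
  by (induction xs) (auto simp: plus_eq_infty_iff_enat)

lemma S_inf: "S xs i = \<infinity> \<Longrightarrow> \<exists>j. i \<le> j \<and> j < length xs \<and> xs!j = \<infinity>"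
proof -
  assume "S xs i = \<infinity>"
  hence "\<infinity> \<in> set (drop i xs)" unfolding S_def by (rule sum_list_inf)
  then obtain q where "q < length (drop i xs)" "drop i xs ! q = \<infinity>" by (metis in_set_conv_nth)
  thus ?thesis by (intro exI[of _ "i+q"]) auto
qed

lemma sum_list_upd: "k < length xs \<Longrightarrow> sum_list (xs[k:=x]) + xs!k = sum_list xs + (x::enat)"
proof (induction xs arbitrary: k)
  case Nil then show ?case by simp
next
  case (Cons a xs) then show ?case by (cases k) (auto simp: add_ac)
qed

lemma S_upd_le: "i \<le> s \<Longrightarrow> s < length m \<Longrightarrow> S (m[s:=x]) i + m!s = S m i + x"
  unfolding S_def using sum_list_upd[of "s-i" "drop i m" x]
  by (simp add: drop_update_swap)

lemma S_upd_gt: "s < i \<Longrightarrow> S (m[s:=x]) i = S m i"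
  unfolding S_def by simp

lemma pre_le: "prepartition r xs \<Longrightarrow> i \<le> j \<Longrightarrow> j < r \<Longrightarrow> xs!j \<le> xs!i"
  unfolding prepartition_def using sorted_wrt_iff_nth_less[of "\<lambda>a b. b \<le> a" xs]
  by (metis order.order_iff_strict order_refl)

lemma enat_a1: "X + enat (Suc n) = Y + enat n \<Longrightarrow> X + 1 = Y"
  by (cases X; cases Y) (auto simp: one_enat_def)

lemma enat_a2: "X + enat p = Y + (enat p + 1) \<Longrightarrow> X = Y + 1"
  by (cases X; cases Y) (auto simp: one_enat_def)

lemma enat_lt1: "enat p < x \<Longrightarrow> enat p + 1 \<le> x"
  by (metis eSuc_plus_1 ileI1)

lemma enat_lt2: "x < enat n \<Longrightarrow> x \<le> enat n - 1"
  by (cases x) (auto simp: one_enat_def)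

lemma move:
  assumes pre: "prepartition r m" and ts: "t < s" "s < r"
    and fin_t: "m!t \<noteq> \<infinity>" and fin_s: "m!s \<noteq> \<infinity>" and pos: "0 < m!s"
    and a: "t = 0 \<or> m!t < m!(t-1)"
    and b: "Suc s < r \<longrightarrow> m!(Suc s) < m!s"
    and l: "l = m[s := m!s - 1, t := m!t + 1]"
  shows "prepartition r l" "l!s + 1 = m!s" "l!t = m!t + 1"
    "\<forall>i<r. i\<noteq>s \<and> i\<noteq>t \<longrightarrow> l!i = m!i"
    "\<forall>i. t<i \<and> i \<le> s \<longrightarrow> S l i + 1 = S m i"
    "\<forall>i. \<not>(t<i \<and> i\<le>s) \<longrightarrow> S l i = S m i"
proof -
  have len: "length m = r" using pre unfolding prepartition_def by simp
  obtain n where n: "m!s = enat (Suc n)" using fin_s pos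
  proof -
    obtain q where q: "m!s = enat q" using fin_s by auto
    then have "q > 0" using pos by (simp add: zero_enat_def)
    then obtain n where "q = Suc n" using gr0_implies_Suc by blast
    thus ?thesis using q that by simp
  qed
  obtain p where p: "m!t = enat p" using fin_t by auto
  define l1 where "l1 = m[s := m!s - 1]"
  have l1l: "l = l1[t := l1!t + 1]" using l ts unfolding l1_def by simp
  have l1t: "l1!t = m!t" using ts unfolding l1_def by simp
  have ls: "l!s = enat n" using l ts len n by (simp add: one_enat_def)
  show "l!s + 1 = m!s" using ls n by (simp add: one_enat_def)
  show lt: "l!t = m!t + 1" using l ts len by simp
  show oth: "\<forall>i<r. i\<noteq>s \<and> i\<noteq>t \<longrightarrow> l!i = m!i" using l by simp
  have S1: "S l1 i + 1 = S m i" if "i \<le> s" for i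
  proof -
    have "S l1 i + m!s = S m i + (m!s - 1)" unfolding l1_def
      using S_upd_le[OF that] ts len by simp
    thus ?thesis using n by (intro enat_a1[of _ n]) (simp add: one_enat_def)
  qed
  have S1': "S l1 i = S m i" if "s < i" for i unfolding l1_def using S_upd_gt[OF that] .
  have S2: "S l i = S l1 i + 1" if "i \<le> t" for i
  proof -
    have tl: "t < length l1" using ts len unfolding l1_def by simp
    have "S l i + l1!t = S l1 i + (l1!t + 1)" unfolding l1l
      by (rule S_upd_le[OF that tl])
    thus ?thesis using p l1t by (intro enat_a2[of _ p]) simp
  qed
  have S2': "S l i = S l1 i" if "t < i" for i unfolding l1l using S_upd_gt[OF that] .
  show "\<forall>i. t<i \<and> i \<le> s \<longrightarrow> S l i + 1 = S m i" using S1 S2' by simp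
  show "\<forall>i. \<not>(t<i \<and> i\<le>s) \<longrightarrow> S l i = S m i"
  proof (intro allI impI)
    fix i assume "\<not>(t<i \<and> i\<le>s)"
    then consider "i \<le> t" | "s < i" by linarith
    thus "S l i = S m i"
    proof cases
      case 1 thus ?thesis using S1[of i] S2[OF 1] ts by simp
    next
      case 2 thus ?thesis using S1'[OF 2] S2'[of i] ts by simp
    qed
  qed
  have lenl: "length l = r" using l len by simp
  have ge: "m!i \<le> l!i" if "i < r" "i \<noteq> s" for i
    using that oth lt by (cases "i = t") auto
  have le: "l!j \<le> m!j" if "j < r" "j \<noteq> t" for j
    using that oth ls n by (cases "j = s") (auto simp: one_enat_def)
  have "l!j \<le> l!i" if ij: "i < j" "j < r" for i j
  proof (cases "j = t")
    case True
    then have "t > 0" using ij by simp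
    hence "m!t + 1 \<le> m!(t-1)" using a p enat_lt1 by auto
    moreover have "m!(t-1) \<le> m!i" using pre_le[OF pre, of i "t-1"] ij True by simp
    moreover have "l!i = m!i" using oth ij True ts by simp
    ultimately show ?thesis using True lt by simp
  next
    case jt: False
    show ?thesis
    proof (cases "i = s")
      case True
      hence "Suc s < r" using ij by simp
      hence "m!(Suc s) \<le> enat n" using b n enat_lt2[of "m!(Suc s)" "Suc n"] by (simp add: one_enat_def)
      moreover have "m!j \<le> m!(Suc s)" using pre_le[OF pre, of "Suc s" j] ij True by simp
      ultimately show ?thesis using True ls le[OF ij(2) jt] by simp
    next
      case False
      have "m!j \<le> m!i" using pre_le[OF pre, of i j] ij by simp
      thus ?thesis using le[OF ij(2) jt] ge[of i] False ij by (meson order_trans less_trans)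
    qed
  qed
  thus "prepartition r l" unfolding prepartition_def using lenl
    by (auto simp: sorted_wrt_iff_nth_less)
qed


lemma remove:
  assumes pre: "prepartition r m" and sr: "s < r"
    and fin_s: "m!s \<noteq> \<infinity>" and pos: "0 < m!s"
    and b: "Suc s < r \<longrightarrow> m!(Suc s) < m!s"
    and l: "l = m[s := m!s - 1]"
  shows "prepartition r l" "l!s + 1 = m!s"
    "\<forall>i<r. i\<noteq>s \<longrightarrow> l!i = m!i"
    "\<forall>i. i \<le> s \<longrightarrow> S l i + 1 = S m i"
    "\<forall>i. s < i \<longrightarrow> S l i = S m i"
proof -
  have len: "length m = r" using pre unfolding prepartition_def by simp
  obtain n where n: "m!s = enat (Suc n)"
  proof -
    obtain q where q: "m!s = enat q" using fin_s by auto
    then have "q > 0" using pos by (simp add: zero_enat_def)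
    then obtain n where "q = Suc n" using gr0_implies_Suc by blast
    thus ?thesis using q that by simp
  qed
  have ls: "l!s = enat n" using l sr len n by (simp add: one_enat_def)
  show "l!s + 1 = m!s" using ls n by (simp add: one_enat_def)
  show oth: "\<forall>i<r. i\<noteq>s \<longrightarrow> l!i = m!i" using l by simp
  show "\<forall>i. i \<le> s \<longrightarrow> S l i + 1 = S m i"
  proof (intro allI impI)
    fix i assume that: "i \<le> s"
    have "S l i + m!s = S m i + (m!s - 1)" unfolding l
      using S_upd_le[OF that] sr len by simp
    thus "S l i + 1 = S m i" using n by (intro enat_a1[of _ n]) (simp add: one_enat_def)
  qed
  show "\<forall>i. s < i \<longrightarrow> S l i = S m i" unfolding l using S_upd_gt by blast
  have lenl: "length l = r" using l len by simp
  have "l!j \<le> l!i" if ij: "i < j" "j < r" for i j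
  proof (cases "i = s")
    case True
    hence "Suc s < r" using ij by simp
    hence "m!(Suc s) \<le> enat n" using b n enat_lt2[of "m!(Suc s)" "Suc n"] by (simp add: one_enat_def)
    moreover have "m!j \<le> m!(Suc s)" using pre_le[OF pre, of "Suc s" j] ij True by simp
    ultimately show ?thesis using True ls oth ij by simp
  next
    case False
    have "m!j \<le> m!i" using pre_le[OF pre, of i j] ij by simp
    moreover have "l!j \<le> m!j" using oth ls n ij by (cases "j = s") (auto simp: one_enat_def)
    ultimately show ?thesis using oth False ij by (metis order_trans less_trans)
  qed
  thus "prepartition r l" unfolding prepartition_def using lenl
    by (auto simp: sorted_wrt_iff_nth_less)
qed

lemma codom_S: "codom l m \<longleftrightarrow> length l = length m \<and> (\<forall>i. S l i \<le> S m i)"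
  unfolding codom_def S_def by (metis drop_all linorder_not_le order_refl)

lemma S_inf_iff: "prepartition r xs \<Longrightarrow> S xs i = \<infinity> \<longleftrightarrow> (i < r \<and> xs!i = \<infinity>)"
proof
  assume pre: "prepartition r xs" and "S xs i = \<infinity>"
  then obtain j where j: "i \<le> j" "j < length xs" "xs!j = \<infinity>" using S_inf by blast
  have len: "length xs = r" using pre unfolding prepartition_def by simp
  have "xs!j \<le> xs!i" using pre_le[OF pre j(1)] j len by simp
  thus "i < r \<and> xs!i = \<infinity>" using j len by simp
next
  assume pre: "prepartition r xs" and "i < r \<and> xs!i = \<infinity>"
  hence "\<infinity> \<le> S xs i" using S_mem[of i i xs] pre unfolding prepartition_def by auto
  thus "S xs i = \<infinity>" by (cases "S xs i") auto
qed

lemma block: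
  assumes pre: "prepartition r xs" and q: "q < r"
  defines "b \<equiv> LEAST i. xs!i = xs!q"
  shows "b \<le> q" "\<forall>i. b \<le> i \<and> i \<le> q \<longrightarrow> xs!i = xs!q" "b = 0 \<or> xs!b < xs!(b-1)"
proof -
  show bq: "b \<le> q" unfolding b_def by (rule Least_le) simp
  have xb: "xs!b = xs!q" unfolding b_def by (rule LeastI[of _ q]) simp
  show "\<forall>i. b \<le> i \<and> i \<le> q \<longrightarrow> xs!i = xs!q"
  proof (intro allI impI)
    fix i assume i: "b \<le> i \<and> i \<le> q"
    have "xs!q \<le> xs!i" using pre_le[OF pre, of i q] i q by simp
    moreover have "xs!i \<le> xs!b" using pre_le[OF pre, of b i] i q by simp
    ultimately show "xs!i = xs!q" using xb by simp
  qed
  show "b = 0 \<or> xs!b < xs!(b-1)"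
  proof (cases "b = 0")
    case False
    have "xs!(b-1) \<noteq> xs!q" unfolding b_def
      using not_less_Least[of "b-1" "\<lambda>i. xs!i = xs!q"] False b_def by simp
    moreover have "xs!b \<le> xs!(b-1)" using pre_le[OF pre, of "b-1" b] bq q by simp
    ultimately show ?thesis using xb by (simp add: order.order_iff_strict)
  qed simp
qed

definition fcount :: "enat list \<Rightarrow> nat" where
  "fcount m = card {i. i < length m \<and> m!i = \<infinity>}"

definition fin :: "enat \<Rightarrow> nat" where
  "fin x = (case x of enat n \<Rightarrow> n | \<infinity> \<Rightarrow> 0)"

definition g :: "enat list \<Rightarrow> nat" where
  "g m = (\<Sum>i<length m. fin (S m i))"

lemma finish:
  assumes len: "length l = length m" "length lam = length m"
    and rel: "\<forall>i. S l i = S m i \<or> S l i + 1 = S m i"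
    and lamS: "\<forall>i. S lam i \<le> S l i"
    and s: "s < length m" "S m s \<noteq> \<infinity>" "S l s + 1 = S m s"
    and infs: "\<forall>i<length m. (l!i = \<infinity> \<longleftrightarrow> m!i = \<infinity>)"
  shows "codom lam l" "codom l m" "(l, m) \<in> measures [fcount, g]"
proof -
  show "codom lam l" using len lamS codom_S by simp
  have le: "S l i \<le> S m i" for i using rel[rule_format, of i]
    by (metis le_iff_add order_refl)
  show "codom l m" using len le codom_S by simp
  have fc: "fcount l = fcount m" unfolding fcount_def using len infs by metis
  have "fin (S l i) \<le> fin (S m i)" for i
    using rel[rule_format, of i]
    by (cases "S l i"; cases "S m i") (auto simp: fin_def one_enat_def)
  moreover have "fin (S l s) < fin (S m s)" using s
    by (cases "S l s"; cases "S m s") (auto simp: fin_def one_enat_def)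
  ultimately have "(\<Sum>i<length m. fin (S l i)) < (\<Sum>i<length m. fin (S m i))"
    using s(1) by (intro sum_strict_mono_ex1) auto
  hence "g l < g m" unfolding g_def using len by simp
  thus "(l, m) \<in> measures [fcount, g]" using fc by simp
qed

lemma enat_le1: "X + 1 = Y \<Longrightarrow> Z < (Y::enat) \<Longrightarrow> Z \<le> X"
  by (cases X; cases Y; cases Z) (auto simp: one_enat_def)


lemma Lstep:
  assumes pl: "prepartition r lam" and pm: "prepartition r mu"
    and cS: "\<forall>i. S lam i \<le> S mu i"
    and i0: "0 < i" and ir: "i < r" and eq: "mu!(i-1) = mu!i" and fin: "mu!i \<noteq> \<infinity>"
    and nx: "S lam (Suc i) < S mu (Suc i)"
  shows "S lam i < S mu i"
proof (rule ccontr)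
  assume "\<not> ?thesis"
  hence e: "S lam i = S mu i" using cS[rule_format, of i] by (simp add: le_less)
  have ll: "length lam = r" "length mu = r" using pl pm unfolding prepartition_def by auto
  have si: "Suc (i-1) = i" using i0 by simp
  have fm1: "S mu (i-1) \<noteq> \<infinity>" using S_inf_iff[OF pm, of "i-1"] eq fin by simp
  have fl1: "S lam (i-1) \<noteq> \<infinity>" using cS[rule_format, of "i-1"] fm1 by (cases "S lam (i-1)") auto
  have e1: "S lam (i-1) = lam!(i-1) + S lam i" using S_step[of "i-1" lam] ll ir si by simp
  have e2: "S mu (i-1) = mu!(i-1) + S mu i" using S_step[of "i-1" mu] ll ir si by simp
  have e3: "S lam i = lam!i + S lam (Suc i)" using S_step[of i lam] ll ir by simp
  have e4: "S mu i = mu!i + S mu (Suc i)" using S_step[of i mu] ll ir by simp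
  have c1: "S lam (i-1) \<le> S mu (i-1)" using cS by simp
  have mo: "lam!i \<le> lam!(i-1)" using pre_le[OF pl, of "i-1" i] ir by simp
  obtain a1 where a1: "lam!(i-1) = enat a1" using fl1 e1 by (cases "lam!(i-1)") auto
  obtain a2 where a2: "S lam i = enat a2" using fl1 e1 by (cases "S lam i") auto
  obtain a3 where a3: "lam!i = enat a3" using a2 e3 by (cases "lam!i") auto
  obtain a4 where a4: "S lam (Suc i) = enat a4" using a2 e3 by (cases "S lam (Suc i)") auto
  obtain b1 where b1: "mu!i = enat b1" using fin by auto
  obtain b2 where b2: "S mu (Suc i) = enat b2" using e a2 e4 by (cases "S mu (Suc i)") auto
  have "a1 + a2 \<le> b1 + a2" using c1 e1 e2 a1 a2 b1 e eq by simp
  moreover have "a2 = a3 + a4" using e3 a2 a3 a4 by simp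
  moreover have "a2 = b1 + b2" using e e4 a2 b1 b2 by simp
  moreover have "a4 < b2" using nx a4 b2 by simp
  moreover have "a3 \<le> a1" using mo a1 a3 by simp
  ultimately show False by linarith
qed

lemma Lrange:
  assumes pl: "prepartition r lam" and pm: "prepartition r mu"
    and cS: "\<forall>i. S lam i \<le> S mu i" and sr: "s < r"
    and hs: "S lam s < S mu s" and fin: "mu!t \<noteq> \<infinity>" and ts: "t \<le> s"
    and blk: "\<forall>i. t < i \<and> i < s \<longrightarrow> mu!(i-1) = mu!i"
  shows "\<forall>i. t < i \<and> i \<le> s \<longrightarrow> S lam i < S mu i"
proof -
  have main: "\<forall>i. i = s - d \<and> t < i \<longrightarrow> S lam i < S mu i" for d
  proof (induction d)
    case 0 show ?case using hs by simp
  next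
    case (Suc d)
    show ?case
    proof (intro allI impI)
      fix i assume h: "i = s - Suc d \<and> t < i"
      have hi: "i = s - Suc d" and ht: "t < i" using h by blast+
      have "0 < i" using ht by linarith
      hence is': "i < s" "Suc i = s - d" "t < Suc i" using hi ht by arith+
      have ih: "S lam (Suc i) < S mu (Suc i)" using Suc.IH is' by blast
      have "mu!i \<le> mu!t" using pre_le[OF pm, of t i] h is' sr by simp
      hence fi: "mu!i \<noteq> \<infinity>" using fin by (cases "mu!i") auto
      have i0: "0 < i" using ht by linarith
      have ir: "i < r" using is' sr by simp
      have ieq: "mu!(i-1) = mu!i" using blk h is' by blast
      show "S lam i < S mu i" by (rule Lstep[OF pl pm cS i0 ir ieq fi ih])
    qed
  qed
  show ?thesis
  proof (intro allI impI)
    fix i assume "t < i \<and> i \<le> s"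
    thus "S lam i < S mu i" using main[of "s - i"] by simp
  qed
qed


lemma enat_fin1: "x + 1 = y \<Longrightarrow> y \<noteq> \<infinity> \<Longrightarrow> x \<noteq> (\<infinity>::enat)"
  by (cases x) auto

lemma infs_move:
  fixes l m :: "enat list"
  assumes "l!s + 1 = m!s" "m!s \<noteq> \<infinity>" "l!t = m!t + 1" "m!t \<noteq> \<infinity>"
    "\<forall>i<r. i\<noteq>s \<and> i\<noteq>t \<longrightarrow> l!i = m!i" "length m = r"
  shows "\<forall>i<length m. (l!i = \<infinity> \<longleftrightarrow> m!i = \<infinity>)"
proof (intro allI impI)
  fix i assume i: "i < length m"
  have ls: "l!s \<noteq> \<infinity>" using enat_fin1[OF assms(1,2)] .
  have lt: "l!t \<noteq> \<infinity>" using assms(3,4) by (simp add: plus_eq_infty_iff_enat)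
  show "(l!i = \<infinity> \<longleftrightarrow> m!i = \<infinity>)"
  proof (cases "i = s \<or> i = t")
    case True thus ?thesis using ls lt assms(2,4) by auto
  next
    case False thus ?thesis using assms(5,6) i by auto
  qed
qed

lemma infs_rem:
  fixes l m :: "enat list"
  assumes "l!s + 1 = m!s" "m!s \<noteq> \<infinity>"
    "\<forall>i<r. i\<noteq>s \<longrightarrow> l!i = m!i" "length m = r"
  shows "\<forall>i<length m. (l!i = \<infinity> \<longleftrightarrow> m!i = \<infinity>)"
proof (intro allI impI)
  fix i assume i: "i < length m"
  have ls: "l!s \<noteq> \<infinity>" using enat_fin1[OF assms(1,2)] .
  show "(l!i = \<infinity> \<longleftrightarrow> m!i = \<infinity>)"
  proof (cases "i = s")
    case True thus ?thesis using ls assms(2) by auto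
  next
    case False thus ?thesis using assms(3,4) i by auto
  qed
qed

lemma step_inf:
  assumes pl: "prepartition r lam" and pm: "prepartition r mu"
    and cS: "\<forall>i. S lam i \<le> S mu i"
    and ex: "\<exists>j<r. mu!j = \<infinity> \<and> lam!j \<noteq> \<infinity>"
  shows "\<exists>mu'. prepartition r mu' \<and> codom lam mu' \<and> codom mu' mu \<and> elementary_step mu' mu
          \<and> (mu', mu) \<in> measures [fcount, g]"
proof -
  have ll: "length lam = r" "length mu = r" using pl pm unfolding prepartition_def by auto
  obtain j0 where j0: "j0 < r" "mu!j0 = \<infinity>" "lam!j0 \<noteq> \<infinity>" using ex by blast
  define J where "J = {i. i < r \<and> mu!i = \<infinity>}"
  have fJ: "finite J" unfolding J_def by simp
  have j0J: "j0 \<in> J" unfolding J_def using j0 by simp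
  define j where "j = Max J"
  have jJ: "j \<in> J" unfolding j_def using fJ j0J Max_in by blast
  have j0j: "j0 \<le> j" unfolding j_def using fJ j0J by simp
  have jr: "j < r" and mj: "mu!j = \<infinity>" using jJ unfolding J_def by auto
  have above: "\<forall>i. j < i \<and> i < r \<longrightarrow> mu!i \<noteq> \<infinity>"
  proof (intro allI impI)
    fix i assume i: "j < i \<and> i < r"
    show "mu!i \<noteq> \<infinity>"
    proof
      assume "mu!i = \<infinity>"
      hence "i \<in> J" unfolding J_def using i by simp
      hence "i \<le> j" unfolding j_def using fJ by simp
      thus False using i by simp
    qed
  qed
  have "lam!j \<le> lam!j0" using pre_le[OF pl j0j jr] .
  hence lj: "lam!j \<noteq> \<infinity>" using j0 by (cases "lam!j") auto
  have fSl: "S lam j \<noteq> \<infinity>" using S_inf_iff[OF pl, of j] lj by simp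
  have fSm: "S mu (Suc j) \<noteq> \<infinity>" using S_inf_iff[OF pm, of "Suc j"] above by simp
  define v where "v = S lam j + S mu (Suc j)"
  have vf: "v \<noteq> \<infinity>" unfolding v_def using fSl fSm by (simp add: plus_eq_infty_iff_enat)
  define mu' where "mu' = mu[j := v]"
  have len': "length mu' = r" unfolding mu'_def using ll by simp
  have below: "\<forall>i. i \<le> j \<longrightarrow> mu!i = \<infinity>"
    using pre_le[OF pm _ jr] mj by (metis top.extremum_uniqueI top_enat_def)
  have "mu'!i' \<le> mu'!i" if ii: "i < i'" "i' < r" for i i'
  proof (cases "i' = j")
    case True
    hence "mu'!i = \<infinity>" unfolding mu'_def using below ii by simp
    thus ?thesis by simp
  next
    case False
    note F = False
    show ?thesis
    proof (cases "i = j")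
      case True
      have "mu!i' \<le> S mu (Suc j)" using S_mem[of "Suc j" i' mu] ii True ll by simp
      also have "\<dots> \<le> v" unfolding v_def by (simp add: le_iff_add add.commute)
      finally show ?thesis unfolding mu'_def using True F ii ll by simp
    next
      case False
      thus ?thesis unfolding mu'_def using F pre_le[OF pm, of i i'] ii by simp
    qed
  qed
  hence pre': "prepartition r mu'" unfolding prepartition_def using len'
    by (auto simp: sorted_wrt_iff_nth_less)
  have lamS: "S lam i \<le> S mu' i" for i
  proof -
    consider "i < j" | "i = j" | "j < i" by linarith
    thus ?thesis
    proof cases
      case 1
      have "mu'!i = \<infinity>" unfolding mu'_def using 1 below by simp
      hence "S mu' i = \<infinity>" using S_inf_iff[OF pre', of i] 1 jr by simp
      thus ?thesis by simp
    next
      case 2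
      have "S mu' j = v + S mu (Suc j)" using S_step[of j mu'] len' jr S_upd_gt[of j "Suc j" mu v]
        unfolding mu'_def by simp
      thus ?thesis unfolding 2 v_def by (simp add: le_iff_add add.assoc)
    next
      case 3
      thus ?thesis using S_upd_gt[OF 3, of mu v] cS unfolding mu'_def by simp
    qed
  qed
  have muS: "S mu' i \<le> S mu i" for i
  proof (cases "i \<le> j")
    case True
    hence "S mu i = \<infinity>" using S_inf_iff[OF pm, of i] below jr by simp
    thus ?thesis by simp
  next
    case False
    thus ?thesis using S_upd_gt[of j i mu v] unfolding mu'_def by simp
  qed
  have c1: "codom lam mu'" using lamS codom_S ll len' by simp
  have c2: "codom mu' mu" using muS codom_S ll len' by simp
  have "infinite_removal mu' mu" unfolding infinite_removal_def
  proof (intro conjI exI[of _ j])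
    show "length mu' = length mu" using ll len' by simp
    show "j < length mu" using jr ll by simp
    show "mu!j = \<infinity>" by (rule mj)
    show "\<forall>i. j < i \<and> i < length mu \<longrightarrow> mu!i \<noteq> \<infinity>" using above ll by simp
    show "mu'!j < mu!j" unfolding mu'_def using mj vf jr ll by simp
    show "\<forall>i<length mu. i \<noteq> j \<longrightarrow> mu'!i = mu!i" unfolding mu'_def by simp
  qed
  hence es: "elementary_step mu' mu" unfolding elementary_step_def by simp
  have "{i. i < length mu' \<and> mu'!i = \<infinity>} = J - {j}"
  proof (intro set_eqI iffI)
    fix x assume "x \<in> {i. i < length mu' \<and> mu'!i = \<infinity>}"
    hence x: "x < r" "mu'!x = \<infinity>" using len' by auto
    hence "x \<noteq> j" unfolding mu'_def using vf jr ll by auto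
    thus "x \<in> J - {j}" using x unfolding J_def mu'_def by simp
  next
    fix x assume "x \<in> J - {j}"
    thus "x \<in> {i. i < length mu' \<and> mu'!i = \<infinity>}" unfolding J_def mu'_def using ll by simp
  qed
  moreover have "{i. i < length mu \<and> mu!i = \<infinity>} = J" unfolding J_def using ll by simp
  moreover have "card (J - {j}) < card J" using fJ jJ by (rule card_Diff1_less)
  ultimately have "fcount mu' < fcount mu" unfolding fcount_def by simp
  hence "(mu', mu) \<in> measures [fcount, g]" by simp
  thus ?thesis using pre' c1 c2 es by blast
qed


lemma step_fin:
  assumes pl: "prepartition r lam" and pm: "prepartition r mu"
    and cS: "\<forall>i. S lam i \<le> S mu i" and ne: "lam \<noteq> mu"
    and nex: "\<not> (\<exists>j<r. mu!j = \<infinity> \<and> lam!j \<noteq> \<infinity>)"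
  shows "\<exists>mu'. prepartition r mu' \<and> codom lam mu' \<and> codom mu' mu \<and> elementary_step mu' mu
          \<and> (mu', mu) \<in> measures [fcount, g]"
proof -
  have ll: "length lam = r" "length mu = r" using pl pm unfolding prepartition_def by auto
  define K where "K = {i. i < r \<and> S lam i < S mu i}"
  have fK: "finite K" unfolding K_def by simp
  have Kne: "K \<noteq> {}"
  proof
    assume K0: "K = {}"
    have eqS: "S lam i = S mu i" for i
    proof (cases "i < r")
      case True
      hence "\<not> S lam i < S mu i" using K0 unfolding K_def by auto
      thus ?thesis using cS[rule_format, of i] by simp
    next
      case False thus ?thesis using S_ge ll by simp
    qed
    have "lam!i = mu!i" if ir: "i < r" for i
    proof -
      have e: "lam!i + S lam (Suc i) = mu!i + S mu (Suc i)"
        using S_step[of i lam] S_step[of i mu] ll ir eqS[of i] by simp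
      show ?thesis
      proof (cases "S mu (Suc i) = \<infinity>")
        case True
        hence m1: "Suc i < r" "mu!(Suc i) = \<infinity>" using S_inf_iff[OF pm] by auto
        hence "mu!i = \<infinity>" using pre_le[OF pm, of i "Suc i"] by (simp add: top_unique[unfolded top_enat_def])
        moreover have "S lam (Suc i) = \<infinity>" using True eqS by simp
        hence "lam!i = \<infinity>" using S_inf_iff[OF pl] pre_le[OF pl, of i "Suc i"]
          by (simp add: top_unique[unfolded top_enat_def])
        ultimately show ?thesis by simp
      next
        case False
        then obtain c where c: "S mu (Suc i) = enat c" by auto
        hence "enat c + lam!i = enat c + mu!i" using e eqS[of "Suc i"] by (simp add: add.commute)
        thus ?thesis using enat_add_left_cancel by simp
      qed
    qed
    hence "lam = mu" using ll by (simp add: nth_equalityI)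
    thus False using ne by simp
  qed
  define k where "k = Max K"
  have kK: "k \<in> K" unfolding k_def using fK Kne Max_in by blast
  hence kr: "k < r" and hk: "S lam k < S mu k" unfolding K_def by auto
  have abv: "\<forall>i. k < i \<longrightarrow> S lam i = S mu i"
  proof (intro allI impI)
    fix i assume ki: "k < i"
    show "S lam i = S mu i"
    proof (cases "i < r")
      case True
      have "i \<notin> K" using ki fK k_def by (metis Max_ge leD)
      hence "\<not> S lam i < S mu i" using True unfolding K_def by simp
      thus ?thesis using cS[rule_format, of i] by simp
    next
      case False thus ?thesis using S_ge ll by simp
    qed
  qed
  have fin_lam: "lam!i \<noteq> \<infinity>" if "k \<le> i" "i < r" for i
  proof
    assume "lam!i = \<infinity>"
    hence "S lam k = \<infinity>" using S_mem[of k i lam] that ll by (simp add: top_unique[unfolded top_enat_def])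
    thus False using hk by simp
  qed
  have fin_mu: "mu!i \<noteq> \<infinity>" if "k \<le> i" "i < r" for i
  proof
    assume "mu!i = \<infinity>"
    hence "\<exists>j<r. mu!j = \<infinity> \<and> lam!j \<noteq> \<infinity>" using fin_lam[OF that] that(2) by blast
    thus False using nex by simp
  qed
  have fSmu: "S mu i \<noteq> \<infinity>" if "k \<le> i" for i
    using S_inf_iff[OF pm, of i] fin_mu that by auto
  have eqpos: "lam!i = mu!i" if ki0: "k < i" and ir0: "i < r" for i
  proof -
    have e1: "S lam i = lam!i + S lam (Suc i)" using S_step[of i lam] ll that by simp
    have e2: "S mu i = mu!i + S mu (Suc i)" using S_step[of i mu] ll that by simp
    have e3: "S lam i = S mu i" using abv that by simp
    have e: "lam!i + S lam (Suc i) = mu!i + S mu (Suc i)" using e1 e2 e3 by metis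
    have "k \<le> Suc i" using ki0 by simp
    then obtain c where c: "S mu (Suc i) = enat c" using fSmu[of "Suc i"] by auto
    hence "enat c + lam!i = enat c + mu!i" using e abv that by (simp add: add.commute)
    thus ?thesis using enat_add_left_cancel by simp
  qed
  have lk: "lam!k < mu!k"
  proof (rule ccontr)
    assume "\<not> ?thesis"
    hence "mu!k \<le> lam!k" by simp
    hence "mu!k + S mu (Suc k) \<le> lam!k + S mu (Suc k)" by (rule add_right_mono)
    moreover have "S lam (Suc k) = S mu (Suc k)" using abv by simp
    ultimately have "mu!k + S mu (Suc k) \<le> lam!k + S lam (Suc k)" by simp
    hence "S mu k \<le> S lam k" using S_step[of k lam] S_step[of k mu] ll kr by simp
    thus False using hk by simp
  qed
  have pos: "0 < mu!k" using le_less_trans[OF zero_le lk] .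
  have bk: "Suc k < r \<longrightarrow> mu!(Suc k) < mu!k"
  proof
    assume a: "Suc k < r"
    have "mu!(Suc k) = lam!(Suc k)" using eqpos[of "Suc k"] a by simp
    also have "\<dots> \<le> lam!k" using pre_le[OF pl, of k "Suc k"] a by simp
    finally show "mu!(Suc k) < mu!k" using lk by simp
  qed
  have mkf: "mu!k \<noteq> \<infinity>" using fin_mu kr by simp
  define p where "p = (LEAST i. mu!i = mu!k)"
  have pk: "p \<le> k" and pblk: "\<forall>i. p \<le> i \<and> i \<le> k \<longrightarrow> mu!i = mu!k"
    and pa: "p = 0 \<or> mu!p < mu!(p-1)"
    using block[OF pm kr] unfolding p_def by blast+
  have mp: "mu!p = mu!k" using pblk pk by blast
  have "p < k \<or> (p = k \<and> (k = 0 \<or> mu!(k-1) = \<infinity>)) \<or> (p = k \<and> 0 < k \<and> mu!(k-1) \<noteq> \<infinity>)"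
    using pk by linarith
  then consider (c1) "p < k" | (c2) "p = k" "k = 0 \<or> mu!(k-1) = \<infinity>"
    | (c3) "p = k" "0 < k" "mu!(k-1) \<noteq> \<infinity>" by blast
  then show ?thesis
  proof cases
    case c1
    define l where "l = mu[k := mu!k - 1, p := mu!p + 1]"
    have fp: "mu!p \<noteq> \<infinity>" using mp mkf by simp
    note mv = move[OF pm c1 kr fp mkf pos pa bk l_def]
    have rng: "\<forall>i. p < i \<and> i \<le> k \<longrightarrow> S lam i < S mu i"
    proof -
      have "\<forall>i. p < i \<and> i < k \<longrightarrow> mu!(i-1) = mu!i"
      proof (intro allI impI)
        fix i assume h: "p < i \<and> i < k"
        hence a: "p \<le> i-1 \<and> i-1 \<le> k" and b: "p \<le> i \<and> i \<le> k" by auto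
        have "mu!(i-1) = mu!k" "mu!i = mu!k" using pblk a b by blast+
        thus "mu!(i-1) = mu!i" by simp
      qed
      thus ?thesis using Lrange[OF pl pm cS kr hk fp pk] by blast
    qed
    have lamS: "\<forall>i. S lam i \<le> S l i"
      using mv(5,6) rng cS enat_le1 by metis
    have rel: "\<forall>i. S l i = S mu i \<or> S l i + 1 = S mu i" using mv(5,6) by metis
    have lenl: "length l = r" unfolding l_def using ll by simp
    have lkf: "l!k \<noteq> \<infinity>" using enat_fin1[OF mv(2) mkf] .
    have infs: "\<forall>i<length mu. (l!i = \<infinity> \<longleftrightarrow> mu!i = \<infinity>)"
      by (rule infs_move[OF mv(2) mkf mv(3) fp mv(4) ll(2)])
    have fsh: "S l k + 1 = S mu k" using mv(5) c1 by simp
    note fi = finish[of l mu lam k, OF _ _ rel lamS _ _ fsh infs]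
    have F: "codom lam l" "codom l mu" "(l, mu) \<in> measures [fcount, g]"
      using fi lenl ll kr fSmu[of k] by auto
    have "fall l mu" unfolding fall_def
    apply (rule conjI)
      subgoal using lenl ll by simp
    apply (rule exI[of _ "p"], rule exI[of _ "k"], intro conjI)
      subgoal by (rule c1)
      subgoal using kr ll by simp
      subgoal by (rule mv(2))
      subgoal by (rule mv(3))
      subgoal using mv(4) ll by auto
      subgoal using pblk by metis
    done
    hence "elementary_step l mu" unfolding elementary_step_def by simp
    thus ?thesis using F mv(1) by blast
  next
    case c2
    define l where "l = mu[k := mu!k - 1]"
    note rm = remove[OF pm kr mkf pos bk l_def]
    have lenl: "length l = r" unfolding l_def using ll by simp
    have binf: "\<forall>i<k. mu!i = \<infinity>"
    proof (intro allI impI)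
      fix i assume ik: "i < k"
      hence "mu!(k-1) = \<infinity>" using c2 by auto
      moreover have "mu!(k-1) \<le> mu!i" using pre_le[OF pm, of i "k-1"] ik kr by simp
      ultimately show "mu!i = \<infinity>" by (simp add: top_unique[unfolded top_enat_def])
    qed
    have lamS: "\<forall>i. S lam i \<le> S l i"
    proof
      fix i
      consider "i < k" | "i = k" | "k < i" by linarith
      thus "S lam i \<le> S l i"
      proof cases
        case 1
        have "l!i = \<infinity>" using rm(3) binf 1 kr by simp
        hence "S l i = \<infinity>" using S_inf_iff[OF rm(1), of i] 1 kr by simp
        thus ?thesis by simp
      next
        case 2 thus ?thesis using rm(4) hk enat_le1 by blast
      next
        case 3 thus ?thesis using rm(5) cS by metis
      qed
    qed
    have rel: "\<forall>i. S l i = S mu i \<or> S l i + 1 = S mu i" using rm(4,5) by (metis not_le)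
    have lkf: "l!k \<noteq> \<infinity>" using enat_fin1[OF rm(2) mkf] .
    have infs: "\<forall>i<length mu. (l!i = \<infinity> \<longleftrightarrow> mu!i = \<infinity>)"
      by (rule infs_rem[OF rm(2) mkf rm(3) ll(2)])
    have fsh: "S l k + 1 = S mu k" using rm(4) by simp
    note fi = finish[of l mu lam k, OF _ _ rel lamS _ _ fsh infs]
    have F: "codom lam l" "codom l mu" "(l, mu) \<in> measures [fcount, g]"
      using fi lenl ll kr fSmu[of k] by auto
    have "simple_removal l mu" unfolding simple_removal_def
    proof (intro conjI exI[of _ k])
      show "length l = length mu" using lenl ll by simp
      show "k < length mu" using kr ll by simp
      show "mu!k \<noteq> \<infinity>" by (rule mkf)
      show "\<forall>i<k. mu!i = \<infinity>" by (rule binf)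
      show "l!k + 1 = mu!k" by (rule rm(2))
      show "\<forall>i<length mu. i \<noteq> k \<longrightarrow> l!i = mu!i" using rm(3) ll by auto
    qed
    hence "elementary_step l mu" unfolding elementary_step_def by simp
    thus ?thesis using F rm(1) by blast
  next
    case c3
    have k1r: "k - 1 < r" using kr by simp
    define t where "t = (LEAST i. mu!i = mu!(k-1))"
    have tk: "t \<le> k-1" and tblk: "\<forall>i. t \<le> i \<and> i \<le> k-1 \<longrightarrow> mu!i = mu!(k-1)"
      and ta: "t = 0 \<or> mu!t < mu!(t-1)"
      using block[OF pm k1r] unfolding t_def by blast+
    have "mu!(k-1) \<noteq> mu!k"
      using not_less_Least[of "k-1" "\<lambda>i. mu!i = mu!k"] c3 unfolding p_def by simp
    moreover have "mu!k \<le> mu!(k-1)" using pre_le[OF pm, of "k-1" k] kr by simp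
    ultimately have mk1: "mu!k < mu!(k-1)" by simp
    have sk: "Suc (k-1) = k" using c3 by simp
    have "t = k-1 \<or> t < k-1" using tk by linarith
    then consider (c3a) "t = k-1" | (c3b) "t < k-1" by blast
    then show ?thesis
    proof cases
      case c3a
      define l where "l = mu[k := mu!k - 1, (k-1) := mu!(k-1) + 1]"
      have lt: "k - 1 < k" using c3 by simp
      have pa': "k-1 = 0 \<or> mu!(k-1) < mu!(k-1-1)" using ta c3a by simp
      note mv = move[OF pm lt kr c3(3) mkf pos pa' bk l_def]
      have lamS: "\<forall>i. S lam i \<le> S l i"
      proof
        fix i
        show "S lam i \<le> S l i"
        proof (cases "k-1 < i \<and> i \<le> k")
          case True
          hence "i = k" by linarith
          thus ?thesis using mv(5) True hk enat_le1 by blast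
        next
          case False thus ?thesis using mv(6) cS by metis
        qed
      qed
      have rel: "\<forall>i. S l i = S mu i \<or> S l i + 1 = S mu i" using mv(5,6) by metis
      have lenl: "length l = r" unfolding l_def using ll by simp
      have lkf: "l!k \<noteq> \<infinity>" using enat_fin1[OF mv(2) mkf] .
      have infs: "\<forall>i<length mu. (l!i = \<infinity> \<longleftrightarrow> mu!i = \<infinity>)"
        by (rule infs_move[OF mv(2) mkf mv(3) c3(3) mv(4) ll(2)])
      have fsh: "S l k + 1 = S mu k" using mv(5) lt by simp
      note fi = finish[of l mu lam k, OF _ _ rel lamS _ _ fsh infs]
      have F: "codom lam l" "codom l mu" "(l, mu) \<in> measures [fcount, g]"
        using fi lenl ll kr fSmu[of k] by auto
      have "slip l mu" unfolding slip_def
      proof (intro conjI exI[of _ "k-1"])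
        show "length l = length mu" using lenl ll by simp
        show "k - 1 + 1 < length mu" using kr ll sk by simp
        show "l!(k-1+1) + 1 = mu!(k-1+1)" using mv(2) sk by simp
        show "l!(k-1) = mu!(k-1) + 1" by (rule mv(3))
        show "\<forall>i<length mu. i \<noteq> k-1 \<and> i \<noteq> k-1+1 \<longrightarrow> l!i = mu!i" using mv(4) ll sk by auto
      qed
      hence "elementary_step l mu" unfolding elementary_step_def by simp
      thus ?thesis using F mv(1) by blast
    next
      case c3b
      define l where "l = mu[k-1 := mu!(k-1) - 1, t := mu!t + 1]"
      have "mu!t = mu!(k-1)" using tblk tk by blast
      hence ft: "mu!t \<noteq> \<infinity>" using c3(3) by simp
      have pos': "0 < mu!(k-1)" using le_less_trans[OF zero_le mk1] .
      have b': "Suc (k-1) < r \<longrightarrow> mu!(Suc (k-1)) < mu!(k-1)" using sk mk1 by simp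
      note mv = move[OF pm c3b k1r ft c3(3) pos' ta b' l_def]
      have tk': "t \<le> k" using tk by simp
      have blk': "\<forall>i. t < i \<and> i < k \<longrightarrow> mu!(i-1) = mu!i"
      proof (intro allI impI)
        fix i assume h: "t < i \<and> i < k"
        hence a: "t \<le> i-1 \<and> i-1 \<le> k-1" and b: "t \<le> i \<and> i \<le> k-1" by auto
        have "mu!(i-1) = mu!(k-1)" "mu!i = mu!(k-1)" using tblk a b by blast+
        thus "mu!(i-1) = mu!i" by simp
      qed
      have rng: "\<forall>i. t < i \<and> i \<le> k \<longrightarrow> S lam i < S mu i"
        by (rule Lrange[OF pl pm cS kr hk ft tk' blk'])
      have lamS: "\<forall>i. S lam i \<le> S l i"
      proof
        fix i
        show "S lam i \<le> S l i"
        proof (cases "t < i \<and> i \<le> k-1")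
          case True
          hence "S lam i < S mu i" using rng[rule_format, of i] by linarith
          thus ?thesis using mv(5) True enat_le1 by blast
        next
          case False thus ?thesis using mv(6) cS by metis
        qed
      qed
      have rel: "\<forall>i. S l i = S mu i \<or> S l i + 1 = S mu i" using mv(5,6) by metis
      have lenl: "length l = r" unfolding l_def using ll by simp
      have lkf: "l!(k-1) \<noteq> \<infinity>" using enat_fin1[OF mv(2) c3(3)] .
      have infs: "\<forall>i<length mu. (l!i = \<infinity> \<longleftrightarrow> mu!i = \<infinity>)"
        by (rule infs_move[OF mv(2) c3(3) mv(3) ft mv(4) ll(2)])
      have fsh: "S l (k-1) + 1 = S mu (k-1)" using mv(5) c3b by simp
      have fS: "S mu (k-1) \<noteq> \<infinity>" using S_inf_iff[OF pm, of "k-1"] c3(3) by simp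
      note fi = finish[of l mu lam "k-1", OF _ _ rel lamS _ _ fsh infs]
      have F: "codom lam l" "codom l mu" "(l, mu) \<in> measures [fcount, g]"
        using fi lenl ll k1r fS by auto
      have "fall l mu" unfolding fall_def
      apply (rule conjI)
        subgoal using lenl ll by simp
      apply (rule exI[of _ "t"], rule exI[of _ "k-1"], intro conjI)
        subgoal by (rule c3b)
        subgoal using k1r ll by simp
        subgoal by (rule mv(2))
        subgoal by (rule mv(3))
        subgoal using mv(4) ll by auto
        subgoal using tblk by metis
      done
      hence "elementary_step l mu" unfolding elementary_step_def by simp
      thus ?thesis using F mv(1) by blast
    qed
  qed
qed


lemma chain:
  assumes pl: "prepartition r lam"
  shows "prepartition r mu \<Longrightarrow> codom lam mu \<Longrightarrow> \<exists>nus :: enat list list. nus \<noteq> [] \<and> hd nus = mu \<and> last nus = lam \<and>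
           (\<forall>nu \<in> set nus. prepartition r nu) \<and>
           (\<forall>i. i + 1 < length nus \<longrightarrow>
              codom (nus ! (i + 1)) (nus ! i) \<and> elementary_step (nus ! (i + 1)) (nus ! i))"
proof (induction mu rule: wf_induct_rule[OF wf_measures[of "[fcount, g]"]])
  case (1 mu)
  have pm: "prepartition r mu" and cd: "codom lam mu" using "1.prems" by auto
  show ?case
  proof (cases "lam = mu")
    case True
    show ?thesis by (rule exI[of _ "[mu]"]) (use True pm in auto)
  next
    case False
    have cS: "\<forall>i. S lam i \<le> S mu i" using cd codom_S by simp
    have "\<exists>mu'. prepartition r mu' \<and> codom lam mu' \<and> codom mu' mu \<and> elementary_step mu' mu
          \<and> (mu', mu) \<in> measures [fcount, g]"
    proof (cases "\<exists>j<r. mu!j = \<infinity> \<and> lam!j \<noteq> \<infinity>")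
      case True thus ?thesis using step_inf[OF pl pm cS] by blast
    next
      case nT: False thus ?thesis using step_fin[OF pl pm cS False nT] by blast
    qed
    then obtain mu' where m': "prepartition r mu'" "codom lam mu'" "codom mu' mu"
      "elementary_step mu' mu" "(mu', mu) \<in> measures [fcount, g]" by blast
    obtain nus where nus: "nus \<noteq> []" "hd nus = mu'" "last nus = lam"
      "\<forall>nu \<in> set nus. prepartition r nu"
      "\<forall>i. i + 1 < length nus \<longrightarrow>
              codom (nus ! (i + 1)) (nus ! i) \<and> elementary_step (nus ! (i + 1)) (nus ! i)"
      using "1.IH"[OF m'(5) m'(1) m'(2)] by blast
    have h0: "nus ! 0 = mu'" using nus(1,2) by (simp add: hd_conv_nth)
    show ?thesis
    proof (rule exI[of _ "mu # nus"], intro conjI)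
      show "mu # nus \<noteq> []" by simp
      show "hd (mu # nus) = mu" by simp
      show "last (mu # nus) = lam" using nus(1,3) by simp
      show "\<forall>nu \<in> set (mu # nus). prepartition r nu" using nus(4) pm by simp
      show "\<forall>i. i + 1 < length (mu # nus) \<longrightarrow>
              codom ((mu # nus) ! (i + 1)) ((mu # nus) ! i) \<and> elementary_step ((mu # nus) ! (i + 1)) ((mu # nus) ! i)"
      proof (intro allI impI)
        fix i assume i: "i + 1 < length (mu # nus)"
        show "codom ((mu # nus) ! (i + 1)) ((mu # nus) ! i) \<and> elementary_step ((mu # nus) ! (i + 1)) ((mu # nus) ! i)"
        proof (cases i)
          case 0 thus ?thesis using h0 m'(3,4) by simp
        next
          case (Suc j) thus ?thesis using nus(5)[rule_format, of j] i by simp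
        qed
      qed
    qed
  qed
qed

theorem theorem2p1:
  fixes r :: nat and lam mu :: "enat list"
  assumes "r \<ge> 1"
    and "prepartition r lam" and "prepartition r mu"
    and "codom lam mu"
  shows "\<exists>nus :: enat list list. nus \<noteq> [] \<and> hd nus = mu \<and> last nus = lam \<and>
           (\<forall>nu \<in> set nus. prepartition r nu) \<and>
           (\<forall>i. i + 1 < length nus \<longrightarrow>
              codom (nus ! (i + 1)) (nus ! i) \<and> elementary_step (nus ! (i + 1)) (nus ! i))"
  using chain[OF assms(2) assms(3) assms(4)] .

end
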